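(* Let $p\ge3$ be an integer. For each integer $k\ge1$ and each $1\le j\le k$, let $a_j=a_j(k)$ denote the smallest positive root of $g_j(\alpha)=j\alpha^{p-1}-(k-j+1)-(j-1)(1+\alpha)^{p-1}$. Then $\displaystyle\lim_{k\to\infty}\sum_{j=1}^k\frac1{a_j(k)}=\infty$. *)

theory Defs
  imports Complex_Main
begin

definition gfun :: "nat \<Rightarrow> nat \<Rightarrow> nat \<Rightarrow> real \<Rightarrow> real" where
  "gfun p k j \<alpha> = real j * \<alpha> ^ (p - 1) - (real k - real j + 1)
                   - (real j - 1) * (1 + \<alpha>) ^ (p - 1)"

definition aroot :: "nat \<Rightarrow> nat \<Rightarrow> nat \<Rightarrow> real" where
  "aroot p k j = Inf {\<alpha>::real. \<alpha> > 0 \<and> gfun p k j \<alpha> = 0}"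

end

theory Submission
  imports Defs "HOL-Analysis.Harmonic_Numbers" "HOL-Real_Asymp.Real_Asymp"
begin

lemma pow_aux:
  fixes x :: real assumes "x \<ge> 0"
  shows "(1+x)^(Suc n) \<le> x^(Suc n) + real (Suc n) * (1+x)^n"
proof (induction n)
  case 0 then show ?case by simp
next
  case (Suc n)
  have "(1+x)^(Suc (Suc n)) = (1+x) * (1+x)^(Suc n)" by simp
  also have "\<dots> \<le> (1+x) * (x^(Suc n) + real (Suc n) * (1+x)^n)"
    using Suc assms by (intro mult_left_mono) auto
  also have "\<dots> = x^(Suc (Suc n)) + x^(Suc n) + real (Suc n) * (1+x)^(Suc n)"
    by (simp add: algebra_simps)
  also have "x^(Suc n) \<le> (1+x)^(Suc n)" using assms by (intro power_mono) auto
  finally show ?case by (simp add: algebra_simps)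
qed

lemma g_neg:
  assumes "p \<ge> 3" "1 \<le> j" "j \<le> k" "0 \<le> a" "a < 1"
  shows "gfun p k j a < 0"
proof -
  have A: "a^(p-1) < 1" using assms by (intro power_less_one_iff[THEN iffD2]) auto
  have B: "real j * a^(p-1) < real j" using assms A by simp
  have C: "(1+a)^(p-1) \<ge> 1" using assms by (intro one_le_power) auto
  have D: "(real j - 1) * (1+a)^(p-1) \<ge> real j - 1" using assms C
    by (metis mult_left_mono mult.right_neutral diff_ge_0_iff_ge of_nat_1 of_nat_le_iff)
  have E: "real j \<le> real k" using assms by simp
  show ?thesis using B D E unfolding gfun_def by linarith
qed

lemma g_pos:
  assumes "p \<ge> 3" "1 \<le> j" "j \<le> k" "j \<le> n" "k \<le> n*n"
  shows "gfun p k j (2 * (real (p-1) * 2^(p-2)) * real n) \<ge> 0"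
proof -
  define m where "m = p - 2"
  have m1: "m \<ge> 1" and q: "p - 1 = Suc m" using assms by (auto simp: m_def)
  define C :: real where "C = real (Suc m) * 2^m"
  have C1: "C \<ge> 1"
  proof -
    have "(1::real) \<le> 2^m" by simp
    moreover have "(1::real) \<le> real (Suc m)" by simp
    ultimately show ?thesis unfolding C_def using mult_mono[of 1 "real (Suc m)" 1 "2^m"] by simp
  qed
  define a where "a = 2 * C * real n"
  have n1: "real n \<ge> 1" using assms by simp
  have a1: "a \<ge> 1" unfolding a_def using C1 n1 mult_mono[of 1 C 1 "real n"] by simp
  have aeq: "2 * (real (p-1) * 2^(p-2)) * real n = a" unfolding a_def C_def m_def
    using q m_def by simp
  have P: "(1+a)^(Suc m) \<le> a^(Suc m) + real (Suc m) * (1+a)^m"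
    using pow_aux[of a m] a1 by simp
  have "gfun p k j a = real j * a^(Suc m) - (real k - real j + 1) - (real j - 1) * (1+a)^(Suc m)"
    unfolding gfun_def q ..
  also have "\<dots> \<ge> real j * a^(Suc m) - (real k - real j + 1) - (real j - 1) * (a^(Suc m) + real (Suc m) * (1+a)^m)"
    using P assms by (intro diff_left_mono mult_left_mono) auto
  finally have G1: "gfun p k j a \<ge> a^(Suc m) - (real k - real j + 1) - (real j - 1) * (real (Suc m) * (1+a)^m)"
    by (simp add: algebra_simps)
  have "(1+a)^m \<le> (2*a)^m" using a1 by (intro power_mono) auto
  hence B: "(real j - 1) * (real (Suc m) * (1+a)^m) \<le> real j * (real (Suc m) * (2*a)^m)"
    using assms a1 by (intro mult_mono) auto
  have "real j * (real (Suc m) * (2*a)^m) = a^m * (C * real j)"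
    unfolding C_def by (simp add: power_mult_distrib algebra_simps)
  with G1 B assms have G2: "gfun p k j a \<ge> a^m * (a - C * real j) - real k"
    by (simp add: algebra_simps)
  have cj: "C * real j \<le> C * real n" using C1 assms by (intro mult_left_mono) auto
  have cn: "real n \<le> C * real n" using C1 n1 mult_right_mono[of 1 C "real n"] by simp
  have "a - C * real j \<ge> real n" unfolding a_def using cj cn by linarith
  moreover have "a^m \<ge> real n"
  proof -
    have "a^m \<ge> a" using a1 m1 by (metis power_increasing power_one_right)
    moreover have "a \<ge> real n" unfolding a_def using cn n1 by linarith
    ultimately show ?thesis by simp
  qed
  ultimately have "a^m * (a - C * real j) \<ge> real n * real n"
    using n1 by (intro mult_mono) auto
  moreover have "real n * real n \<ge> real k" using assms
    by (metis of_nat_le_iff of_nat_mult)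
  ultimately have "gfun p k j a \<ge> 0" using G2 by simp
  thus ?thesis using aeq by simp
qed

lemma aroot_bounds:
  assumes "p \<ge> 3" "1 \<le> j" "j \<le> k" "j \<le> n" "k \<le> n*n"
  shows "1 \<le> aroot p k j \<and> aroot p k j \<le> 2 * (real (p-1) * 2^(p-2)) * real n"
proof -
  define b where "b = 2 * (real (p-1) * 2^(p-2)) * real n"
  define S where "S = {\<alpha>::real. \<alpha> > 0 \<and> gfun p k j \<alpha> = 0}"
  have gb: "gfun p k j b \<ge> 0" using g_pos[OF assms] unfolding b_def .
  have g0: "gfun p k j 0 < 0" using g_neg[OF assms(1-3)] by simp
  have b0: "b \<ge> 0" unfolding b_def by simp
  have cont: "continuous_on {0..b} (gfun p k j)" unfolding gfun_def
    by (intro continuous_intros)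
  obtain x where x: "0 \<le> x" "x \<le> b" "gfun p k j x = 0"
    using IVT'[of "gfun p k j" 0 0 b, OF _ gb b0 cont] g0 by auto
  have x0: "x > 0" using x g0 by (cases "x = 0") auto
  have xS: "x \<in> S" unfolding S_def using x x0 by auto
  have low: "\<And>y. y \<in> S \<Longrightarrow> 1 \<le> y"
  proof -
    fix y assume "y \<in> S"
    hence "y > 0" "gfun p k j y = 0" unfolding S_def by auto
    thus "1 \<le> y" using g_neg[OF assms(1-3), of y] by force
  qed
  have bdd: "bdd_below S" using low by (intro bdd_belowI[of S 1]) auto
  have "Inf S \<le> x" using cInf_lower[OF xS bdd] .
  moreover have "1 \<le> Inf S" using xS low by (intro cInf_greatest) auto
  ultimately have "1 \<le> Inf S \<and> Inf S \<le> b" using x by linarith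
  moreover have "aroot p k j = Inf S" unfolding aroot_def S_def ..
  ultimately show ?thesis unfolding b_def by simp
qed

lemma ln_sum_bound:
  assumes "s \<ge> 1"
  shows "ln (real (s + d)) - ln (real s) \<le> (\<Sum>j = s..<s+d. 1 / real j)"
proof (induction d)
  case 0 then show ?case by simp
next
  case (Suc d)
  have "ln (real (s + Suc d)) - ln (real (s+d)) \<le> 1 / real (s+d)"
    using ln_diff_le_inverse[of "real (s+d)"] assms by (simp add: add_ac)
  then show ?case using Suc by simp
qed

theorem mainTheorem9:
  fixes p :: nat
  assumes "p \<ge> 3"
  shows "filterlim (\<lambda>k. \<Sum>j = 1..k. 1 / aroot p k j) at_top sequentially"
proof -
  define C :: real where "C = 2 * (real (p-1) * 2^(p-2))"
  have C0: "C > 0" unfolding C_def using assms by simp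
  have lim: "filterlim (\<lambda>k::nat. (ln (real k) / 2 - ln 2) / C) at_top sequentially"
    using C0 by real_asymp
  show ?thesis
  proof (rule filterlim_at_top_mono[OF lim])
    show "\<forall>\<^sub>F k in sequentially. (ln (real k) / 2 - ln 2) / C \<le> (\<Sum>j = 1..k. 1 / aroot p k j)"
      using eventually_ge_at_top[of "1::nat"]
    proof eventually_elim
      case (elim k)
      define r where "r = nat \<lfloor>sqrt (real k)\<rfloor>"
      have sq1: "sqrt (real k) \<ge> 1" using elim by simp
      have r1: "real r \<le> sqrt (real k)" unfolding r_def using sq1 by linarith
      have r2: "sqrt (real k) < real r + 1" unfolding r_def using sq1 by linarith
      have "real k < (real r + 1)^2" using r2 sq1
        by (metis of_nat_0_le_iff power_strict_mono real_sqrt_pow2 real_sqrt_ge_zero zero_less_numeral)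
      hence "real k < real ((r+1)*(r+1))" by (simp add: power2_eq_square algebra_simps)
      hence kr: "k < (r+1)*(r+1)" by (simp only: of_nat_less_iff)
      have rk: "r \<le> k"
      proof -
        have "sqrt (real k) \<le> real k"
          using sq1 mult_left_mono[of 1 "sqrt (real k)" "sqrt (real k)"] by simp
        thus ?thesis using r1 by simp
      qed
      have nonneg: "0 \<le> 1 / aroot p k j" if jj: "j \<in> {1..k}" for j
      proof -
        have "k \<le> k * k" using elim by simp
        hence "1 \<le> aroot p k j" using aroot_bounds[OF assms, of j k k] jj by auto
        thus ?thesis by simp
      qed
      have "(\<Sum>j = r+1..k. 1 / aroot p k j) \<le> (\<Sum>j = 1..k. 1 / aroot p k j)"
        by (rule sum_mono2) (use nonneg in auto)
      moreover have "(\<Sum>j = r+1..k. 1 / (C * real j)) \<le> (\<Sum>j = r+1..k. 1 / aroot p k j)"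
      proof (rule sum_mono)
        fix j assume j: "j \<in> {r+1..k}"
        have "k \<le> j*j" using kr j by (meson atLeastAtMost_iff le_trans less_imp_le mult_le_mono)
        hence "1 \<le> aroot p k j \<and> aroot p k j \<le> C * real j"
          using aroot_bounds[OF assms, of j k j] j unfolding C_def by auto
        thus "1 / (C * real j) \<le> 1 / aroot p k j"
          by (intro divide_left_mono) auto
      qed
      moreover have "(\<Sum>j = r+1..k. 1 / (C * real j)) = (\<Sum>j = r+1..k. 1 / real j) / C"
        by (simp add: sum_divide_distrib mult.commute)
      moreover have "ln (real k + 1) - ln (real r + 1) \<le> (\<Sum>j = r+1..k. 1 / real j)"
      proof -
        have e1: "(\<Sum>j = r+1..<(r+1)+(k-r). 1 / real j) = (\<Sum>j = r+1..k. 1 / real j)"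
          using rk by (intro sum.cong) auto
        have e2: "real ((r+1)+(k-r)) = real k + 1" using rk by simp
        have e3: "real (r+1) = real r + 1" by simp
        show ?thesis using ln_sum_bound[of "r+1" "k-r"] unfolding e1 e2 e3 by simp
      qed
      moreover have "ln (real r + 1) \<le> ln 2 + ln (real k) / 2"
      proof -
        have "real r + 1 \<le> 2 * sqrt (real k)" using r1 sq1 by linarith
        hence "ln (real r + 1) \<le> ln (2 * sqrt (real k))" by (intro ln_mono) auto
        also have "\<dots> = ln 2 + ln (real k) / 2" using elim by (simp add: ln_mult ln_sqrt)
        finally show ?thesis .
      qed
      moreover have "ln (real k) \<le> ln (real k + 1)" using elim by simp
      ultimately have H1: "ln (real k) / 2 - ln 2 \<le> (\<Sum>j = r+1..k. 1 / real j)"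
        and H2: "(\<Sum>j = r+1..k. 1 / real j) / C \<le> (\<Sum>j = 1..k. 1 / aroot p k j)"
        by linarith+
      have "(ln (real k) / 2 - ln 2) / C \<le> (\<Sum>j = r+1..k. 1 / real j) / C"
        using H1 C0 by (intro divide_right_mono) auto
      thus ?case using H2 by linarith
    qed
  qed
qed

end
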